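(* Assume (A1), (C1) and (D4) hold, let $\hat x$ be the point in (D4), and let $\{(x^k,y^k)\}$ be generated by the LSAAL algorithm described in the context. Then there exists $\varepsilon_0>0$ such that for all positive integers $\tilde k\le k-1$, $$\mathbb{E}\big[\langle y^k,G(\hat x,\xi_k)\rangle\,\big|\,\mathcal{F}_{\tilde k}\big]\le-\varepsilon_0\,\mathbb{E}\big[\|y^k\|\,\big|\,\mathcal{F}_{\tilde k}\big].$$
   Context: $\mathcal{Y}$ is a finite-dimensional Hilbert space, $\mathcal{K}\subset\mathcal{Y}$ a closed convex cone, $\mathcal{K}^\circ=\{v:\langle v,w\rangle\le0\ \forall w\in\mathcal{K}\}$ its polar cone, $\Pi_{\mathcal{K}^\circ}$ the metric projection. $X\subset\mathbb{R}^n$ nonempty convex compact, contained in an open convex set $\mathcal{O}$. $\xi$ random vector supported on $\Xi\subseteq\mathbb{R}^q$; $F:\mathcal{O}\times\Xi\to\mathbb{R}$, $G:\mathcal{O}\times\Xi\to\mathcal{Y}$ smooth in $x$ for each $\xi$, with gradient $\nabla_xF$, derivative $\mathrm{D}_xG$; $f(x)=\mathbb{E}[F(x,\xi)]$, $g(x)=\mathbb{E}[G(x,\xi)]$. (A1) Samples $\xi_1,\xi_2,\dots$ are i.i.d. copies of $\xi$. (C1) $\mathbb{E}[\nabla_xF(x,\xi)]=\nabla f(x)$ and $\mathbb{E}[\mathrm{D}_xG(x,\xi)]=\mathrm{D}g(x)$ for $x\in\mathcal{O}$. (D4) (Slater) There is $\hat x\in\mathrm{int}\,X$ with $g(\hat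 x)\in\mathrm{int}\,\mathcal{K}$. LSAAL algorithm: $x^1\in X$, $y^1=0$, $\sigma>0$; for $k\ge1$: $l_f^k(x)=F(x^k,\xi_k)+\langle\nabla_xF(x^k,\xi_k),x-x^k\rangle$, $l_g^k(x)=G(x^k,\xi_k)+\mathrm{D}_xG(x^k,\xi_k)(x-x^k)$, $l_\sigma^k(x,y)=l_f^k(x)+\frac{1}{2\sigma}[\|\Pi_{\mathcal{K}^\circ}(y+\sigma l_g^k(x))\|^2-\|y\|^2]$, $x^{k+1}=\mathrm{argmin}_{x\in X}\{l_\sigma^k(x,y^k)+\frac{1}{2\sigma}\|x-x^k\|^2\}$, $y^{k+1}=\Pi_{\mathcal{K}^\circ}(y^k+\sigma l_g^k(x^{k+1}))$. $\mathcal{F}_k$ denotes the $\sigma$-algebra generated by $\xi_1,\dots,\xi_{k-1}$ ($\mathcal{F}_1$ trivial), so that $(x^k,y^k)$ is $\mathcal{F}_k$-measurable. *)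

theory Defs
  imports "HOL-Analysis.Analysis" "HOL-Probability.Probability"
begin

definition polar_cone :: "'a::real_inner set \<Rightarrow> 'a set" where
  "polar_cone K = {v. \<forall>w\<in>K. inner v w \<le> 0}"

definition proj_polar :: "'a::euclidean_space set \<Rightarrow> 'a \<Rightarrow> 'a" where
  "proj_polar K z = closest_point (polar_cone K) z"

definition sample_filtration ::
  "'w measure \<Rightarrow> (nat \<Rightarrow> 'w \<Rightarrow> 'q::topological_space) \<Rightarrow> nat \<Rightarrow> 'w measure" where
  "sample_filtration M xis k =
     sigma (space M) {xis i -` A \<inter> space M | i A. 1 \<le> i \<and> i < k \<and> A \<in> sets borel}"

definition lin_f ::
  "('x \<Rightarrow> 'q \<Rightarrow> real) \<Rightarrow> ('x \<Rightarrow> 'q \<Rightarrow> 'x::real_inner) \<Rightarrow> 'x \<Rightarrow> 'q \<Rightarrow> 'x \<Rightarrow> real" where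
  "lin_f F gradF xk s z = F xk s + inner (gradF xk s) (z - xk)"

definition lin_g ::
  "('x::real_normed_vector \<Rightarrow> 'q \<Rightarrow> 'y::real_normed_vector) \<Rightarrow> ('x \<Rightarrow> 'q \<Rightarrow> 'x \<Rightarrow>\<^sub>L 'y)
     \<Rightarrow> 'x \<Rightarrow> 'q \<Rightarrow> 'x \<Rightarrow> 'y" where
  "lin_g G DG xk s z = G xk s + blinfun_apply (DG xk s) (z - xk)"

definition lin_auglag ::
  "'y::euclidean_space set \<Rightarrow> real \<Rightarrow> ('x \<Rightarrow> 'q \<Rightarrow> real) \<Rightarrow> ('x \<Rightarrow> 'q \<Rightarrow> 'x::euclidean_space)
     \<Rightarrow> ('x \<Rightarrow> 'q \<Rightarrow> 'y) \<Rightarrow> ('x \<Rightarrow> 'q \<Rightarrow> 'x \<Rightarrow>\<^sub>L 'y) \<Rightarrow> 'x \<Rightarrow> 'q \<Rightarrow> 'x \<Rightarrow> 'y \<Rightarrow> real" where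
  "lin_auglag K \<sigma> F gradF G DG xk s z y =
     lin_f F gradF xk s z
     + (1 / (2 * \<sigma>)) * ((norm (proj_polar K (y + \<sigma> *\<^sub>R lin_g G DG xk s z)))\<^sup>2 - (norm y)\<^sup>2)"

end

theory Submission
  imports Defs
begin

definition genE :: "'w measure \<Rightarrow> (nat \<Rightarrow> 'w \<Rightarrow> 'q::topological_space) \<Rightarrow> nat \<Rightarrow> 'w set set" where
  "genE M xis i = {xis i -` A \<inter> space M | A. A \<in> sets borel}"

lemma filt_space: "space (sample_filtration M xis k) = space M"
  unfolding sample_filtration_def by (simp add: space_measure_of_conv)

lemma filt_sets: "sets (sample_filtration M xis k) = sigma_sets (space M) (\<Union>i\<in>{1..<k}. genE M xis i)"
proof -
  have eq: "{xis i -` A \<inter> space M | i A. 1 \<le> i \<and> i < k \<and> A \<in> sets borel} = (\<Union>i\<in>{1..<k}. genE M xis i)"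
    unfolding genE_def by (auto simp: Bex_def; blast)
  show ?thesis unfolding sample_filtration_def eq
    by (rule sets_measure_of) (auto simp: genE_def)
qed

lemma filt_mono: "kt \<le> k \<Longrightarrow> sets (sample_filtration M xis kt) \<subseteq> sets (sample_filtration M xis k)"
  unfolding filt_sets by (rule sigma_sets_mono') (auto simp: Bex_def; fastforce)

lemma filt_subalg:
  assumes "\<And>i. 1 \<le> i \<Longrightarrow> xis i \<in> borel_measurable M"
  shows "subalgebra M (sample_filtration M xis k)"
  unfolding subalgebra_def filt_space filt_sets
proof (intro conjI refl sets.sigma_sets_subset)
  show "(\<Union>i\<in>{1..<k}. genE M xis i) \<subseteq> sets M"
    using assms unfolding genE_def by (auto intro: measurable_sets)
qed

lemma filt_sfs:
  assumes "prob_space M" "\<And>i. 1 \<le> i \<Longrightarrow> xis i \<in> borel_measurable M"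
  shows "sigma_finite_subalgebra M (sample_filtration M xis k)"
proof -
  interpret prob_space M by fact
  interpret finite_measure_subalgebra M "sample_filtration M xis k"
    by unfold_locales (rule filt_subalg[OF assms(2)])
  show ?thesis by unfold_locales
qed

lemma filt_indep:
  fixes h :: "'w \<Rightarrow> real" and \<phi> :: "'q::topological_space \<Rightarrow> real"
  assumes M: "prob_space M" and rv: "\<And>i. 1 \<le> i \<Longrightarrow> xis i \<in> borel_measurable M"
    and ind: "prob_space.indep_vars M (\<lambda>_. borel) xis {1..}"
    and k: "1 \<le> k"
    and h: "h \<in> borel_measurable (sample_filtration M xis k)"
    and phi: "\<phi> \<in> borel_measurable borel"
  shows "prob_space.indep_var M borel h borel (\<lambda>\<omega>. \<phi> (xis k \<omega>))"
proof -
  interpret prob_space M by fact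
  define II where "II = (\<lambda>j::bool. if j then {1..<k} else {k})"
  have i1: "indep_sets (genE M xis) {1..}"
    using ind unfolding indep_vars_def2 genE_def by simp
  have i2: "indep_sets (genE M xis) (\<Union>j. II j)"
    by (rule indep_sets_mono_index[OF _ i1]) (use k in \<open>auto simp: II_def\<close>)
  have i3: "indep_sets (\<lambda>j. sigma_sets (space M) (\<Union>i\<in>II j. genE M xis i)) UNIV"
  proof (rule indep_sets_collect_sigma[OF i2])
    fix i j
    show "Int_stable (genE M xis i)"
      unfolding genE_def Int_stable_def
      apply auto
      apply (rule_tac x="A \<inter> Aa" in exI)
      apply auto
      done
  next
    show "disjoint_family_on II UNIV"
      unfolding disjoint_family_on_def II_def by auto
  qed
  have hM: "h \<in> borel_measurable M"
    by (rule measurable_from_subalg[OF filt_subalg[OF rv] h])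
  have YM: "(\<lambda>\<omega>. \<phi> (xis k \<omega>)) \<in> borel_measurable M"
    using rv[OF k] phi by (rule measurable_compose)
  show ?thesis
    unfolding indep_var_def indep_vars_def2
  proof (intro conjI ballI)
    fix i :: bool show "random_variable (case_bool borel borel i) (case_bool h (\<lambda>\<omega>. \<phi> (xis k \<omega>)) i)"
      using hM YM by (cases i) auto
  next
    show "indep_sets (\<lambda>i. {case_bool h (\<lambda>\<omega>. \<phi> (xis k \<omega>)) i -` A \<inter> space M |A.
                A \<in> sets (case_bool borel borel i)}) UNIV"
    proof (rule indep_sets_mono_sets[OF i3])
      fix i :: bool
      show "{case_bool h (\<lambda>\<omega>. \<phi> (xis k \<omega>)) i -` A \<inter> space M |A.
                A \<in> sets (case_bool borel borel i)} \<subseteq> sigma_sets (space M) (\<Union>i\<in>II i. genE M xis i)"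
      proof (cases i)
        case True
        have "h -` A \<inter> space M \<in> sigma_sets (space M) (\<Union>i\<in>{1..<k}. genE M xis i)" if "A \<in> sets borel" for A
          using measurable_sets[OF h that] unfolding filt_sets filt_space .
        then show ?thesis using True by (auto simp: II_def)
      next
        case False
        have "(\<lambda>\<omega>. \<phi> (xis k \<omega>)) -` A \<inter> space M \<in> genE M xis k" if "A \<in> sets borel" for A
        proof -
          have "\<phi> -` A \<in> sets borel" using measurable_sets[OF phi that] by simp
          moreover have "(\<lambda>\<omega>. \<phi> (xis k \<omega>)) -` A \<inter> space M = xis k -` (\<phi> -` A) \<inter> space M" by auto
          ultimately show ?thesis unfolding genE_def by blast
        qed
        then show ?thesis using False by (auto simp: II_def)
      qed
    qed
  qed
qed

theorem lemma3p3:
  fixes M :: "'w measure"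
    and P :: "'q::euclidean_space measure"
    and \<Xi> :: "'q set"
    and xis :: "nat \<Rightarrow> 'w \<Rightarrow> 'q"
    and K :: "'y::euclidean_space set"
    and X U :: "'x::euclidean_space set"
    and F :: "'x \<Rightarrow> 'q \<Rightarrow> real" and gradF :: "'x \<Rightarrow> 'q \<Rightarrow> 'x"
    and G :: "'x \<Rightarrow> 'q \<Rightarrow> 'y" and DG :: "'x \<Rightarrow> 'q \<Rightarrow> 'x \<Rightarrow>\<^sub>L 'y"
    and f :: "'x \<Rightarrow> real" and g :: "'x \<Rightarrow> 'y"
    and \<sigma> :: real and x1 xhat :: 'x
    and x :: "nat \<Rightarrow> 'w \<Rightarrow> 'x" and y :: "nat \<Rightarrow> 'w \<Rightarrow> 'y"
  assumes M: "prob_space M"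
    and P: "prob_space P" and P_borel: "sets P = sets borel"
    and Xi: "\<Xi> \<in> sets P" "AE s in P. s \<in> \<Xi>"
    \<comment> \<open>(A1): xi_1, xi_2, ... are i.i.d. copies of xi (whose law is P)\<close>
    and xis_rv: "\<And>k. 1 \<le> k \<Longrightarrow> xis k \<in> borel_measurable M"
    and xis_law: "\<And>k. 1 \<le> k \<Longrightarrow> distr M borel (xis k) = P"
    and xis_indep: "prob_space.indep_vars M (\<lambda>_. borel) xis {1..}"
    \<comment> \<open>cone and feasible set\<close>
    and K: "closed K" "convex K" "cone K" "K \<noteq> {}"
    and X: "X \<noteq> {}" "convex X" "compact X" "X \<subseteq> U"
    and U: "open U" "convex U"
    \<comment> \<open>smoothness in x (continuously differentiable) for each sample value\<close>
    and F_deriv: "\<And>s z. s \<in> \<Xi> \<Longrightarrow> z \<in> U \<Longrightarrow>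
        ((\<lambda>u. F u s) has_derivative (\<lambda>h. inner (gradF z s) h)) (at z)"
    and G_deriv: "\<And>s z. s \<in> \<Xi> \<Longrightarrow> z \<in> U \<Longrightarrow>
        ((\<lambda>u. G u s) has_derivative blinfun_apply (DG z s)) (at z)"
    and gradF_cont: "\<And>s. s \<in> \<Xi> \<Longrightarrow> continuous_on U (\<lambda>u. gradF u s)"
    and DG_cont: "\<And>s. s \<in> \<Xi> \<Longrightarrow> continuous_on U (\<lambda>u. DG u s)"
    \<comment> \<open>f and g are the expectations\<close>
    and F_int: "\<And>z. z \<in> U \<Longrightarrow> integrable P (\<lambda>s. F z s)"
    and G_int: "\<And>z. z \<in> U \<Longrightarrow> integrable P (\<lambda>s. G z s)"
    and f_def: "\<And>z. z \<in> U \<Longrightarrow> f z = (\<integral>s. F z s \<partial>P)"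
    and g_def: "\<And>z. z \<in> U \<Longrightarrow> g z = (\<integral>s. G z s \<partial>P)"
    \<comment> \<open>(C1): unbiased gradient / derivative estimates\<close>
    and C1_F: "\<And>z. z \<in> U \<Longrightarrow> integrable P (\<lambda>s. gradF z s) \<and>
        (f has_derivative (\<lambda>h. inner (\<integral>s. gradF z s \<partial>P) h)) (at z)"
    and C1_G: "\<And>z. z \<in> U \<Longrightarrow> (\<forall>h. integrable P (\<lambda>s. blinfun_apply (DG z s) h)) \<and>
        (g has_derivative (\<lambda>h. \<integral>s. blinfun_apply (DG z s) h \<partial>P)) (at z)"
    \<comment> \<open>(D4): Slater point\<close>
    and D4: "xhat \<in> interior X" "g xhat \<in> interior K"
    \<comment> \<open>LSAAL iterates\<close>
    and sigma_pos: "\<sigma> > 0"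
    and x1: "x1 \<in> X" "\<And>\<omega>. \<omega> \<in> space M \<Longrightarrow> x 1 \<omega> = x1"
    and y1: "\<And>\<omega>. \<omega> \<in> space M \<Longrightarrow> y 1 \<omega> = 0"
    and x_step: "\<And>k \<omega>. 1 \<le> k \<Longrightarrow> \<omega> \<in> space M \<Longrightarrow>
        x (Suc k) \<omega> \<in> X \<and>
        (\<forall>z\<in>X. lin_auglag K \<sigma> F gradF G DG (x k \<omega>) (xis k \<omega>) (x (Suc k) \<omega>) (y k \<omega>)
                   + (1 / (2 * \<sigma>)) * (norm (x (Suc k) \<omega> - x k \<omega>))\<^sup>2
               \<le> lin_auglag K \<sigma> F gradF G DG (x k \<omega>) (xis k \<omega>) z (y k \<omega>)
                   + (1 / (2 * \<sigma>)) * (norm (z - x k \<omega>))\<^sup>2)"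
    and y_step: "\<And>k \<omega>. 1 \<le> k \<Longrightarrow> \<omega> \<in> space M \<Longrightarrow>
        y (Suc k) \<omega> = proj_polar K (y k \<omega> + \<sigma> *\<^sub>R lin_g G DG (x k \<omega>) (xis k \<omega>) (x (Suc k) \<omega>))"
    \<comment> \<open>(x^k, y^k) is F_k-measurable; the conditional expectations in the claim exist\<close>
    and x_meas: "\<And>k. 1 \<le> k \<Longrightarrow> x k \<in> borel_measurable (sample_filtration M xis k)"
    and y_meas: "\<And>k. 1 \<le> k \<Longrightarrow> y k \<in> borel_measurable (sample_filtration M xis k)"
    and y_int: "\<And>k. 1 \<le> k \<Longrightarrow> integrable M (\<lambda>\<omega>. norm (y k \<omega>))"
  shows "\<exists>\<epsilon>0>0. \<forall>k kt. 1 \<le> kt \<and> kt \<le> k - 1 \<longrightarrow>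
           (AE \<omega> in M.
              real_cond_exp M (sample_filtration M xis kt) (\<lambda>\<omega>. inner (y k \<omega>) (G xhat (xis k \<omega>))) \<omega>
              \<le> - \<epsilon>0 * real_cond_exp M (sample_filtration M xis kt) (\<lambda>\<omega>. norm (y k \<omega>)) \<omega>)"

proof -
  interpret prob_space M by (rule M)
  obtain e where e: "e > 0" "cball (g xhat) e \<subseteq> K"
    using D4(2) mem_interior_cball by blast
  have pc_eq: "polar_cone K = (\<Inter>w\<in>K. {v. inner w v \<le> 0})"
    unfolding polar_cone_def by (auto simp: inner_commute)
  have pc_closed: "closed (polar_cone K)"
    unfolding pc_eq by (intro closed_INT ballI closed_halfspace_le)
  have pc_ne: "polar_cone K \<noteq> {}"
  proof -
    have "0 \<in> polar_cone K" unfolding polar_cone_def by simp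
    then show ?thesis by blast
  qed
  have key: "inner v (g xhat) \<le> - e * norm v" if v: "v \<in> polar_cone K" for v
  proof (cases "v = 0")
    case True then show ?thesis by simp
  next
    case False
    then have nv: "norm v > 0" by simp
    define z where "z = g xhat + (e / norm v) *\<^sub>R v"
    have "dist (g xhat) z = e" unfolding z_def dist_norm using nv e(1) by simp
    then have "z \<in> K" using e(2) by auto
    then have "inner v z \<le> 0" using v unfolding polar_cone_def by auto
    moreover have "inner v z = inner v (g xhat) + (e / norm v) * (norm v)\<^sup>2"
      unfolding z_def by (simp add: inner_add_right power2_norm_eq_inner)
    moreover have "(e / norm v) * (norm v)\<^sup>2 = e * norm v"
      using nv by (simp add: power2_eq_square)
    ultimately show ?thesis by simp
  qed
  have ypol: "y k \<omega> \<in> polar_cone K" if "2 \<le> k" "\<omega> \<in> space M" for k \<omega>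
  proof -
    have "k = Suc (k - 1)" "1 \<le> k - 1" using that by auto
    then have "y k \<omega> = proj_polar K (y (k-1) \<omega> + \<sigma> *\<^sub>R lin_g G DG (x (k-1) \<omega>) (xis (k-1) \<omega>) (x (Suc (k-1)) \<omega>))"
      using y_step[of "k-1" \<omega>] that(2) by metis
    then show ?thesis unfolding proj_polar_def
      using closest_point_in_set[OF pc_closed pc_ne] by simp
  qed
  have xhatU: "xhat \<in> U" using D4(1) X(4) interior_subset by blast
  have GP: "integrable P (G xhat)" using G_int[OF xhatU] by simp
  have Gb[measurable]: "G xhat \<in> borel_measurable borel"
    using borel_measurable_integrable[OF GP] measurable_cong_sets[OF P_borel refl, of "borel :: 'y measure"] by (simp only:)
  show ?thesis
  proof (intro exI[of _ e] conjI allI impI e(1))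
    fix k kt :: nat
    assume kk: "1 \<le> kt \<and> kt \<le> k - 1"
    then have k2: "2 \<le> k" and k1: "1 \<le> k" and ktk: "kt \<le> k" by auto
    let ?Fk = "sample_filtration M xis k"
    let ?Ft = "sample_filtration M xis kt"
    interpret Ft: sigma_finite_subalgebra M ?Ft by (rule filt_sfs[where xis=xis and M=M and k=kt, OF M xis_rv])
    have xk[measurable]: "xis k \<in> borel_measurable M" by (rule xis_rv[OF k1])
    have yF[measurable]: "y k \<in> borel_measurable ?Fk" by (rule y_meas[OF k1])
    have yM[measurable]: "y k \<in> borel_measurable M"
      by (rule measurable_from_subalg[OF filt_subalg[where xis=xis and M=M and k=k, OF xis_rv] yF])
    have yint: "integrable M (y k)"
      using y_int[OF k1] integrable_norm_iff[OF yM] by simp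
    have ynint: "integrable M (\<lambda>\<omega>. norm (y k \<omega>))" by (rule y_int[OF k1])
    have PD: "P = distr M borel (xis k)" using xis_law[OF k1] by simp
    have Gint: "integrable M (\<lambda>\<omega>. G xhat (xis k \<omega>))"
      using GP unfolding PD by (subst (asm) integrable_distr_eq) auto
    have Gintb: "(\<integral>\<omega>. G xhat (xis k \<omega>) \<bullet> b \<partial>M) = g xhat \<bullet> b" for b
    proof -
      have "(\<integral>\<omega>. G xhat (xis k \<omega>) \<bullet> b \<partial>M) = (\<integral>\<omega>. G xhat (xis k \<omega>) \<partial>M) \<bullet> b"
        using Gint by simp
      also have "(\<integral>\<omega>. G xhat (xis k \<omega>) \<partial>M) = (\<integral>s. G xhat s \<partial>P)"
        unfolding PD by (subst integral_distr) auto
      also have "\<dots> = g xhat" using g_def[OF xhatU] by simp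
      finally show ?thesis .
    qed
    define Z where "Z = (\<lambda>\<omega>. inner (y k \<omega>) (G xhat (xis k \<omega>)))"
    define W where "W = (\<lambda>\<omega>. inner (y k \<omega>) (g xhat))"
    have Zexp: "Z \<omega> = (\<Sum>b\<in>Basis. (y k \<omega> \<bullet> b) * (G xhat (xis k \<omega>) \<bullet> b))" for \<omega>
      unfolding Z_def by (rule euclidean_inner)
    have Wexp: "W \<omega> = (\<Sum>b\<in>Basis. (y k \<omega> \<bullet> b) * (g xhat \<bullet> b))" for \<omega>
      unfolding W_def by (rule euclidean_inner)
    have Wint: "integrable M W" unfolding W_def using yint by simp
    have setint: "(\<integral>\<omega>. indicator A \<omega> * Z \<omega> \<partial>M) = (\<integral>\<omega>. indicator A \<omega> * W \<omega> \<partial>M)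
       \<and> integrable M (\<lambda>\<omega>. indicator A \<omega> * Z \<omega>)"
      if A: "A \<in> sets ?Fk" for A
    proof -
      have AF[measurable]: "A \<in> sets ?Fk" by (rule A)
      have AM[measurable]: "A \<in> sets M" using filt_subalg[where xis=xis and M=M and k=k, OF xis_rv] A unfolding subalgebra_def by auto
      define h where "h = (\<lambda>b \<omega>. indicator A \<omega> * (y k \<omega> \<bullet> b))"
      have hF: "h b \<in> borel_measurable ?Fk" for b unfolding h_def by measurable
      have hint: "integrable M (h b)" for b
        unfolding h_def using integrable_mult_indicator[OF AM, of "\<lambda>\<omega>. y k \<omega> \<bullet> b"] yint by simp
      have Gbint: "integrable M (\<lambda>\<omega>. G xhat (xis k \<omega>) \<bullet> b)" for b using Gint by simp
      have ind: "indep_var borel (h b) borel (\<lambda>\<omega>. G xhat (xis k \<omega>) \<bullet> b)" for b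
        by (rule filt_indep[OF M xis_rv xis_indep k1 hF, of "\<lambda>s. G xhat s \<bullet> b", simplified]) measurable
      have prodint: "integrable M (\<lambda>\<omega>. h b \<omega> * (G xhat (xis k \<omega>) \<bullet> b))" for b
        by (rule indep_var_integrable[OF ind hint Gbint])
      have prodint2: "integrable M (\<lambda>\<omega>. h b \<omega> * (g xhat \<bullet> b))" for b
        using hint by simp
      have eZ: "(\<lambda>\<omega>. indicator A \<omega> * Z \<omega>) = (\<lambda>\<omega>. \<Sum>b\<in>Basis. h b \<omega> * (G xhat (xis k \<omega>) \<bullet> b))"
        unfolding Zexp h_def by (simp add: sum_distrib_left mult.assoc)
      have eW: "(\<lambda>\<omega>. indicator A \<omega> * W \<omega>) = (\<lambda>\<omega>. \<Sum>b\<in>Basis. h b \<omega> * (g xhat \<bullet> b))"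
        unfolding Wexp h_def by (simp add: sum_distrib_left mult.assoc)
      have "(\<integral>\<omega>. indicator A \<omega> * Z \<omega> \<partial>M) = (\<Sum>b\<in>Basis. \<integral>\<omega>. h b \<omega> * (G xhat (xis k \<omega>) \<bullet> b) \<partial>M)"
        unfolding eZ by (rule Bochner_Integration.integral_sum[where f="\<lambda>b \<omega>. h b \<omega> * (G xhat (xis k \<omega>) \<bullet> b)"]) (rule prodint)
      also have "\<dots> = (\<Sum>b\<in>Basis. \<integral>\<omega>. h b \<omega> * (g xhat \<bullet> b) \<partial>M)"
      proof (rule sum.cong[OF refl])
        fix b :: 'y assume "b \<in> Basis"
        show "(\<integral>\<omega>. h b \<omega> * (G xhat (xis k \<omega>) \<bullet> b) \<partial>M) = (\<integral>\<omega>. h b \<omega> * (g xhat \<bullet> b) \<partial>M)"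
          using indep_var_lebesgue_integral[OF ind hint Gbint] Gintb[of b] by simp
      qed
      also have "\<dots> = (\<integral>\<omega>. indicator A \<omega> * W \<omega> \<partial>M)"
        unfolding eW by (rule Bochner_Integration.integral_sum[where f="\<lambda>b \<omega>. h b \<omega> * (g xhat \<bullet> b)", symmetric]) (rule prodint2)
      finally show ?thesis unfolding eZ using prodint by auto
    qed
    have Zint: "integrable M Z"
    proof -
      have "space M \<in> sets ?Fk" using sets.top[of ?Fk] unfolding filt_space .
      then have "integrable M (\<lambda>\<omega>. indicator (space M) \<omega> * Z \<omega>)" using setint by blast
      moreover have "integrable M (\<lambda>\<omega>. indicator (space M) \<omega> * Z \<omega>) \<longleftrightarrow> integrable M Z"
        by (rule Bochner_Integration.integrable_cong) (auto simp: indicator_def)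
      ultimately show ?thesis by simp
    qed
    have ZW: "AE \<omega> in M. real_cond_exp M ?Ft Z \<omega> = real_cond_exp M ?Ft W \<omega>"
    proof (rule Ft.real_cond_exp_charact)
      fix A assume A: "A \<in> sets ?Ft"
      then have AF: "A \<in> sets ?Fk" using filt_mono[OF ktk] by auto
      have "(\<integral>\<omega>\<in>A. Z \<omega> \<partial>M) = (\<integral>\<omega>\<in>A. W \<omega> \<partial>M)"
        unfolding set_lebesgue_integral_def using setint[OF AF] by simp
      also have "\<dots> = (\<integral>\<omega>\<in>A. real_cond_exp M ?Ft W \<omega> \<partial>M)"
        by (rule Ft.real_cond_exp_intA[OF Wint A])
      finally show "(\<integral>\<omega>\<in>A. Z \<omega> \<partial>M) = (\<integral>\<omega>\<in>A. real_cond_exp M ?Ft W \<omega> \<partial>M)" .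
    qed (use Zint Wint in auto)
    have WN: "AE \<omega> in M. real_cond_exp M ?Ft W \<omega> \<le> real_cond_exp M ?Ft (\<lambda>\<omega>. - e * norm (y k \<omega>)) \<omega>"
      by (rule Ft.real_cond_exp_mono) (use key ypol[OF k2] ynint Wint in \<open>auto simp: W_def\<close>)
    have NN: "AE \<omega> in M. real_cond_exp M ?Ft (\<lambda>\<omega>. - e * norm (y k \<omega>)) \<omega> = - e * real_cond_exp M ?Ft (\<lambda>\<omega>. norm (y k \<omega>)) \<omega>"
      by (rule Ft.real_cond_exp_cmult[OF ynint])
    show "AE \<omega> in M. real_cond_exp M ?Ft (\<lambda>\<omega>. inner (y k \<omega>) (G xhat (xis k \<omega>))) \<omega>
              \<le> - e * real_cond_exp M ?Ft (\<lambda>\<omega>. norm (y k \<omega>)) \<omega>"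
      using ZW WN NN unfolding Z_def by eventually_elim simp
  qed
qed

end
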